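(* Let $L\subseteq[0,1]^2$ be a Borel set with $m(L)>0$. Then there exists a compact set $K\subseteq L$ with $m(K)>0$.
   Context: $\lambda$ is Lebesgue measure on $[0,1]$. For a measurable set $L\subseteq[0,1]^2$, define $m(L)=\inf\{\lambda(A)+\lambda(B): L\subseteq (A\times[0,1])\cup([0,1]\times B)\}$, where $A,B$ range over measurable subsets of $[0,1]$. *)

theory Defs
  imports "HOL-Analysis.Analysis"
begin

definition cover_m :: "(real \<times> real) set \<Rightarrow> real" where
  "cover_m L = Inf {measure lebesgue A + measure lebesgue B | A B.
      A \<in> sets lebesgue \<and> B \<in> sets lebesgue \<and> A \<subseteq> {0..1} \<and> B \<subseteq> {0..1} \<and>
      L \<subseteq> (A \<times> {0..1}) \<union> ({0..1} \<times> B)}"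

end

theory Submission
  imports Defs
begin

definition covers :: "(real \<times> real) set \<Rightarrow> real set \<Rightarrow> real set \<Rightarrow> bool" where
  "covers L A B \<longleftrightarrow> A \<in> sets lebesgue \<and> B \<in> sets lebesgue \<and> A \<subseteq> {0..1} \<and> B \<subseteq> {0..1} \<and>
      L \<subseteq> (A \<times> {0..1}) \<union> ({0..1} \<times> B)"

lemma cover_m_set: "{measure lebesgue A + measure lebesgue B | A B.
      A \<in> sets lebesgue \<and> B \<in> sets lebesgue \<and> A \<subseteq> {0..1} \<and> B \<subseteq> {0..1} \<and>
      L \<subseteq> (A \<times> {0..1}) \<union> ({0..1} \<times> B)} = {measure lebesgue A + measure lebesgue B | A B. covers L A B}"
  by (simp add: covers_def)

lemma bdd_cov: "bdd_below {measure lebesgue A + measure lebesgue B | A B. covers L A B}"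
  by (rule bdd_belowI[of _ 0]) auto

lemma nonempty_cov: "L \<subseteq> {0..1} \<times> {0..1} \<Longrightarrow> {measure lebesgue A + measure lebesgue B | A B. covers L A B} \<noteq> {}"
proof -
  assume "L \<subseteq> {0..1} \<times> {0..1}"
  then have "covers L {0..1} {}" by (auto simp: covers_def)
  then show ?thesis by blast
qed

lemma cm_le: "covers L A B \<Longrightarrow> cover_m L \<le> measure lebesgue A + measure lebesgue B"
  unfolding cover_m_def cover_m_set by (rule cInf_lower[OF _ bdd_cov]) blast

lemma cm_nonneg: "L \<subseteq> {0..1} \<times> {0..1} \<Longrightarrow> 0 \<le> cover_m L"
  unfolding cover_m_def cover_m_set by (rule cInf_greatest[OF nonempty_cov]) auto

lemma cm_lessD: assumes "L \<subseteq> {0..1} \<times> {0..1}" "cover_m L < c"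
  obtains A B where "covers L A B" "measure lebesgue A + measure lebesgue B < c"
  using cInf_lessD[OF nonempty_cov[OF assms(1)], of c] assms(2) unfolding cover_m_def cover_m_set by blast

lemma cm_mono: assumes "L \<subseteq> L'" "L' \<subseteq> {0..1} \<times> {0..1}" shows "cover_m L \<le> cover_m L'"
proof -
  have "cover_m L \<le> x" if "x \<in> {measure lebesgue A + measure lebesgue B | A B. covers L' A B}" for x
    using that assms(1) cm_le[of L] unfolding covers_def by auto
  then show ?thesis unfolding cover_m_def[of L'] cover_m_set by (intro cInf_greatest[OF nonempty_cov[OF assms(2)]]) auto
qed

lemma lmeas01: "{0..1::real} \<in> lmeasurable"
  by (metis cbox_interval lmeasurable_cbox)

lemma open_meas_bound:
  fixes A :: "real set"
  assumes A: "A \<in> sets lebesgue" "A \<subseteq> {0..1}" and e: "e > 0"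
  obtains T where "open T" "A \<subseteq> T" "measure lebesgue (T \<inter> {0..1}) \<le> measure lebesgue A + e"
proof -
  obtain T where T: "open T" "A \<subseteq> T" "(T - A) \<in> lmeasurable" "emeasure lebesgue (T - A) < ennreal e"
    using sets_lebesgue_outer_open[OF A(1) e] by blast
  have Al: "A \<in> lmeasurable"
    using fmeasurableI2[OF lmeas01 A(2) A(1)] .
  have "T \<inter> {0..1} \<subseteq> A \<union> (T - A)" by auto
  then have "measure lebesgue (T \<inter> {0..1}) \<le> measure lebesgue (A \<union> (T - A))"
    by (intro measure_mono_fmeasurable) (use T Al fmeasurable.Un[OF Al T(3)] in \<open>auto intro: sets.Int borel_open\<close>)
  also have "\<dots> \<le> measure lebesgue A + measure lebesgue (T - A)"
    by (rule measure_Un_le) (use T Al in auto)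
  also have "measure lebesgue (T - A) \<le> e" using T(4) T(3)
    by (metis ennreal_le_iff emeasure_eq_measure2 less_imp_le order_less_le_trans e ennreal_0 less_eq_ennreal.rep_eq )
  finally show ?thesis using T that by auto
qed

lemma open_Int01_leb: "open (U::real set) \<Longrightarrow> U \<inter> {0..1} \<in> sets lebesgue"
  by (auto intro: sets.Int borel_open)

lemma cm_usc:
  assumes "L \<subseteq> {0..1} \<times> {0..1}" "cover_m L < c"
  obtains U V :: "real set" where "open U" "open V" "L \<subseteq> (U \<times> UNIV) \<union> (UNIV \<times> V)"
    "\<And>L'. L' \<subseteq> {0..1} \<times> {0..1} \<Longrightarrow> L' \<subseteq> (U \<times> UNIV) \<union> (UNIV \<times> V) \<Longrightarrow> cover_m L' < c"
proof -
  obtain A B where AB: "covers L A B" "measure lebesgue A + measure lebesgue B < c"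
    using cm_lessD[OF assms] by blast
  define e where "e = (c - (measure lebesgue A + measure lebesgue B)) / 3"
  have e: "e > 0" using AB(2) by (simp add: e_def)
  obtain U where U: "open U" "A \<subseteq> U" "measure lebesgue (U \<inter> {0..1}) \<le> measure lebesgue A + e"
    using open_meas_bound[of A e] AB(1) e unfolding covers_def by blast
  obtain V where V: "open V" "B \<subseteq> V" "measure lebesgue (V \<inter> {0..1}) \<le> measure lebesgue B + e"
    using open_meas_bound[of B e] AB(1) e unfolding covers_def by blast
  show thesis
  proof (rule that[OF U(1) V(1)])
    show "L \<subseteq> (U \<times> UNIV) \<union> (UNIV \<times> V)" using AB(1) U(2) V(2) unfolding covers_def by blast
    fix L' assume L': "L' \<subseteq> {0..1} \<times> {0..1}" "L' \<subseteq> (U \<times> UNIV) \<union> (UNIV \<times> V)"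
    have cv: "covers L' (U \<inter> {0..1}) (V \<inter> {0..1})"
      unfolding covers_def using L' open_Int01_leb[OF U(1)] open_Int01_leb[OF V(1)] by blast
    have "3 * e = c - (measure lebesgue A + measure lebesgue B)" by (simp add: e_def)
    with cm_le[OF cv] U(3) V(3) e show "cover_m L' < c" by linarith
  qed
qed



abbreviation M01 where "M01 \<equiv> lebesgue_on {0..1::real}"

lemma leb01: "{0..1::real} \<in> sets lebesgue" by simp

lemma fm01: "finite_measure M01"
  by (rule finite_measure_lebesgue_on[OF lmeas01])

lemma meas_M01: "A \<in> sets lebesgue \<Longrightarrow> A \<subseteq> {0..1} \<Longrightarrow> measure M01 A = measure lebesgue A"
  by (rule measure_restrict_space) auto

lemma sets_M01: "A \<in> sets M01 \<longleftrightarrow> A \<subseteq> {0..1} \<and> A \<in> sets lebesgue"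
  by (rule sets_restrict_space_iff) auto

lemma measure_M01_space: "measure M01 {0..1} = 1"
  by (simp add: meas_M01 measure_completion)

lemma integrable01:
  fixes f :: "real \<Rightarrow> real"
  assumes "f \<in> borel_measurable M01" "\<And>x. x \<in> {0..1} \<Longrightarrow> \<bar>f x\<bar> \<le> B"
  shows "integrable M01 f"
  by (rule finite_measure.integrable_const_bound[OF fm01, of _ B]) (use assms in auto)

definition goodf :: "(real \<Rightarrow> real) \<Rightarrow> bool" where
  "goodf u \<longleftrightarrow> u \<in> borel_measurable M01 \<and> (\<forall>x\<in>{0..1}. 0 \<le> u x \<and> u x \<le> 1)"

lemma goodf_int: "goodf u \<Longrightarrow> integrable M01 u"
  unfolding goodf_def by (rule integrable01[of _ 1]) auto

lemma card_le1:
  fixes t :: real assumes "t \<ge> 0"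
  shows "real (card {i\<in>{1..N}. real i \<le> t}) \<le> t"
proof -
  have "{i\<in>{1..N}. real i \<le> t} \<subseteq> {1..nat \<lfloor>t\<rfloor>}"
    using assms by (auto simp: le_nat_iff le_floor_iff)
  then have "card {i\<in>{1..N}. real i \<le> t} \<le> card {1..nat \<lfloor>t\<rfloor>}"
    by (intro card_mono) auto
  then have "card {i\<in>{1..N}. real i \<le> t} \<le> nat \<lfloor>t\<rfloor>" by simp
  then show ?thesis using assms by linarith
qed

lemma card_le2:
  fixes t :: real assumes "t \<ge> 0"
  shows "real (card {i\<in>{1..N}. real (N - i) < t}) \<le> t + 1"
proof -
  have sub: "{i\<in>{1..N}. real (N - i) < t} \<subseteq> (\<lambda>j. N - j) ` {0..<nat \<lceil>t\<rceil>}"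
  proof
    fix i assume i: "i \<in> {i\<in>{1..N}. real (N - i) < t}"
    then have "real (N - i) < t" by blast
    then have "N - i < nat \<lceil>t\<rceil>" by (metis nat_ceiling_le_eq nat_le_linear less_le_not_le)
    moreover have "i = N - (N - i)" using i by auto
    ultimately show "i \<in> (\<lambda>j. N - j) ` {0..<nat \<lceil>t\<rceil>}" by auto
  qed
  have "card {i\<in>{1..N}. real (N - i) < t} \<le> card ((\<lambda>j. N - j) ` {0..<nat \<lceil>t\<rceil>})"
    by (rule card_mono[OF finite_imageI[OF finite_atLeastLessThan] sub])
  also have "\<dots> \<le> card {0..<nat \<lceil>t\<rceil>}" by (rule card_image_le) simp
  finally have "card {i\<in>{1..N}. real (N - i) < t} \<le> nat \<lceil>t\<rceil>" by simp
  then show ?thesis using assms by linarith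
qed



lemma sum_if_card: "finite I \<Longrightarrow> (\<Sum>i\<in>I. if P i then 1 else 0 :: real) = real (card {i\<in>I. P i})"
  by (simp add: sum.inter_filter[symmetric])

lemma thresh:
  assumes L: "L \<subseteq> {0..1} \<times> {0..1}" and H: "goodf H" and G: "goodf G"
    and cov: "\<And>x y. (x, y) \<in> L \<Longrightarrow> 1 \<le> H x + G y"
  shows "cover_m L \<le> integral\<^sup>L M01 H + integral\<^sup>L M01 G"
proof (rule field_le_epsilon)
  fix e :: real assume e: "e > 0"
  obtain N :: nat where N: "N > 0" "inverse (real N) < e"
    using ex_inverse_of_nat_less[OF e] by blast
  define A where "A i = {x\<in>{0..1}. real i / real N \<le> H x}" for i
  define B where "B i = {y\<in>{0..1}. real (N - i) / real N < G y}" for i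
  have Hm: "H \<in> borel_measurable M01" and Gm: "G \<in> borel_measurable M01"
    using H G by (auto simp: goodf_def)
  have AM: "A i \<in> sets M01" for i
  proof -
    have "A i = H -` {real i / real N..} \<inter> space M01" by (auto simp: A_def)
    then show ?thesis using measurable_sets[OF Hm, of "{real i / real N..}"] by auto
  qed
  have BM: "B i \<in> sets M01" for i
  proof -
    have "B i = G -` {real (N - i) / real N<..} \<inter> space M01" by (auto simp: B_def)
    then show ?thesis using measurable_sets[OF Gm, of "{real (N - i) / real N<..}"] by auto
  qed
  have cvi: "covers L (A i) (B i)" if i: "i \<le> N" for i
    unfolding covers_def
  proof (intro conjI)
    show "A i \<in> sets lebesgue" "B i \<in> sets lebesgue" using AM BM sets_M01 by auto
    show "A i \<subseteq> {0..1}" "B i \<subseteq> {0..1}" by (auto simp: A_def B_def)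
    show "L \<subseteq> A i \<times> {0..1} \<union> {0..1} \<times> B i"
    proof (safe)
      fix x y assume xy: "(x, y) \<in> L" "y \<notin> B i"
      have x01: "x \<in> {0..1}" and y01: "y \<in> {0..1}" using xy L by auto
      have "1 \<le> H x + G y" using cov xy by auto
      moreover have "G y \<le> real (N - i) / real N" using xy(2) y01 by (auto simp: B_def)
      moreover have "real (N - i) / real N = 1 - real i / real N" using i N
        by (simp add: of_nat_diff field_simps)
      ultimately show "x \<in> A i" using x01 by (auto simp: A_def)
    qed (use L in auto)
  qed
  have intA: "integral\<^sup>L M01 (indicator (A i)) = measure lebesgue (A i)" for i
    using AM[of i] by (simp add: sets_M01 meas_M01 Int_absorb2)
  have intB: "integral\<^sup>L M01 (indicator (B i)) = measure lebesgue (B i)" for i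
    using BM[of i] by (simp add: sets_M01 meas_M01 Int_absorb2)
  have intI: "integrable M01 (indicator (A i) :: real \<Rightarrow> real)" "integrable M01 (indicator (B i) :: real \<Rightarrow> real)" for i
    using AM BM by (auto intro!: integrable01[of _ 1] borel_measurable_indicator)
  have Hi: "integrable M01 H" and Gi: "integrable M01 G" using H G goodf_int by auto
  have "real N * cover_m L = (\<Sum>i\<in>{1..N}. cover_m L)" by simp
  also have "\<dots> \<le> (\<Sum>i\<in>{1..N}. integral\<^sup>L M01 (indicator (A i)) + integral\<^sup>L M01 (indicator (B i)))"
    by (intro sum_mono) (use cm_le cvi intA intB in auto)
  also have "\<dots> = integral\<^sup>L M01 (\<lambda>x. \<Sum>i\<in>{1..N}. indicator (A i) x + indicator (B i) x)"
  proof -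
    have "(\<Sum>i\<in>{1..N}. integral\<^sup>L M01 (indicator (A i)) + integral\<^sup>L M01 (indicator (B i)))
        = (\<Sum>i\<in>{1..N}. integral\<^sup>L M01 (\<lambda>x. indicator (A i) x + indicator (B i) x :: real))"
      by (intro sum.cong refl) (simp add: integral_add intI)
    also have "\<dots> = integral\<^sup>L M01 (\<lambda>x. \<Sum>i\<in>{1..N}. indicator (A i) x + indicator (B i) x)"
      using integral_sum[where I="{1..N}" and f="\<lambda>i x. indicator (A i) x + indicator (B i) x :: real"] intI by auto
    finally show ?thesis .
  qed
  also have "\<dots> \<le> integral\<^sup>L M01 (\<lambda>x. real N * H x + real N * G x + 1)"
  proof (rule integral_mono)
    show "integrable M01 (\<lambda>x. \<Sum>i\<in>{1..N}. indicator (A i) x + indicator (B i) x :: real)"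
      using intI by auto
    show "integrable M01 (\<lambda>x. real N * H x + real N * G x + 1)"
      using Hi Gi finite_measure.integrable_const[OF fm01] by auto
    fix x assume "x \<in> space M01"
    then have x: "x \<in> {0..1}" by simp
    have hx: "0 \<le> H x" "0 \<le> G x" using H G x by (auto simp: goodf_def)
    have "(\<Sum>i\<in>{1..N}. indicator (A i) x :: real) = (\<Sum>i\<in>{1..N}. if real i \<le> real N * H x then 1 else 0)"
      using N x by (intro sum.cong refl) (auto simp: A_def indicator_def field_simps)
    also have "\<dots> \<le> real N * H x" unfolding sum_if_card[OF finite_atLeastAtMost]
      by (rule card_le1) (use hx in auto)
    finally have 1: "(\<Sum>i\<in>{1..N}. indicator (A i) x :: real) \<le> real N * H x" .
    have "(\<Sum>i\<in>{1..N}. indicator (B i) x :: real) = (\<Sum>i\<in>{1..N}. if real (N - i) < real N * G x then 1 else 0)"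
      using N x by (intro sum.cong refl) (auto simp: B_def indicator_def field_simps)
    also have "\<dots> \<le> real N * G x + 1" unfolding sum_if_card[OF finite_atLeastAtMost]
      by (rule card_le2) (use hx in auto)
    finally have 2: "(\<Sum>i\<in>{1..N}. indicator (B i) x :: real) \<le> real N * G x + 1" .
    show "(\<Sum>i\<in>{1..N}. indicator (A i) x + indicator (B i) x) \<le> real N * H x + real N * G x + 1"
      using 1 2 by (simp add: sum.distrib)
  qed
  also have "\<dots> = real N * (integral\<^sup>L M01 H + integral\<^sup>L M01 G) + 1"
    using Hi Gi finite_measure.integrable_const[OF fm01]
    by (simp add: measure_M01_space distrib_left)
  finally have "real N * cover_m L \<le> real N * (integral\<^sup>L M01 H + integral\<^sup>L M01 G) + 1" .
  then have "cover_m L \<le> integral\<^sup>L M01 H + integral\<^sup>L M01 G + inverse (real N)"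
    using N by (simp add: field_simps)
  then show "cover_m L \<le> integral\<^sup>L M01 H + integral\<^sup>L M01 G + e" using N by linarith
qed



lemma goodf_meas: "goodf u \<Longrightarrow> u \<in> borel_measurable M01" by (simp add: goodf_def)

lemma int_sq: "goodf u \<Longrightarrow> integrable M01 (\<lambda>x. (u x)^2)"
  by (rule integrable01[of _ 1]) (auto simp: goodf_def abs_square_le_1 intro!: borel_measurable_power)

lemma int_sqmid: "goodf u \<Longrightarrow> goodf u' \<Longrightarrow> integrable M01 (\<lambda>x. ((u x + u' x)/2)^2)"
  by (rule integrable01[of _ 1]) (auto simp: goodf_def abs_square_le_1 intro!: borel_measurable_power borel_measurable_add borel_measurable_divide, (smt (verit) atLeastAtMost_iff)+)

lemma int_sqdiff: "goodf u \<Longrightarrow> goodf u' \<Longrightarrow> integrable M01 (\<lambda>x. (u x - u' x)^2)"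
  by (rule integrable01[of _ 1]) (auto simp: goodf_def abs_square_le_1 intro!: borel_measurable_power borel_measurable_diff, (smt (verit) atLeastAtMost_iff)+)

lemma int_absdiff: "goodf u \<Longrightarrow> goodf u' \<Longrightarrow> integrable M01 (\<lambda>x. \<bar>u x - u' x\<bar>)"
  by (rule integrable01[of _ 1]) (auto simp: goodf_def intro!: borel_measurable_abs borel_measurable_diff, (smt (verit) atLeastAtMost_iff)+)

lemma parallelogram:
  assumes "goodf u" "goodf u'"
  shows "integral\<^sup>L M01 (\<lambda>x. (u x - u' x)^2) = 2 * integral\<^sup>L M01 (\<lambda>x. (u x)^2) + 2 * integral\<^sup>L M01 (\<lambda>x. (u' x)^2)
     - 4 * integral\<^sup>L M01 (\<lambda>x. ((u x + u' x)/2)^2)"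
proof -
  have "(\<lambda>x. (u x - u' x)^2) = (\<lambda>x. 2 * (u x)^2 + 2 * (u' x)^2 - 4 * ((u x + u' x)/2)^2)"
    by (rule ext) (simp add: power2_eq_square field_simps)
  then show ?thesis using int_sq[OF assms(1)] int_sq[OF assms(2)] int_sqmid[OF assms]
    by simp
qed

lemma l1_from_l2:
  assumes "goodf u" "goodf u'" "d > 0" "integral\<^sup>L M01 (\<lambda>x. (u x - u' x)^2) \<le> d^2"
  shows "integral\<^sup>L M01 (\<lambda>x. \<bar>u x - u' x\<bar>) \<le> d"
proof -
  have "integral\<^sup>L M01 (\<lambda>x. \<bar>u x - u' x\<bar>) \<le> integral\<^sup>L M01 (\<lambda>x. d/2 + (u x - u' x)^2 / (2*d))"
  proof (rule integral_mono)
    show "integrable M01 (\<lambda>x. \<bar>u x - u' x\<bar>)" by (rule int_absdiff[OF assms(1,2)])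
    show "integrable M01 (\<lambda>x. d/2 + (u x - u' x)^2 / (2*d))"
      using int_sqdiff[OF assms(1,2)] finite_measure.integrable_const[OF fm01] by auto
    fix x
    have "0 \<le> (\<bar>u x - u' x\<bar> - d)^2" by simp
    then have "2 * d * \<bar>u x - u' x\<bar> \<le> d^2 + (u x - u' x)^2"
      by (simp add: power2_eq_square algebra_simps)
    then show "\<bar>u x - u' x\<bar> \<le> d/2 + (u x - u' x)^2 / (2*d)" using assms(3)
      by (simp add: field_simps power2_eq_square)
  qed
  also have "\<dots> = d/2 + integral\<^sup>L M01 (\<lambda>x. (u x - u' x)^2) / (2*d)"
    using int_sqdiff[OF assms(1,2)] finite_measure.integrable_const[OF fm01]
    by (simp add: measure_M01_space)
  also have "\<dots> \<le> d/2 + d^2 / (2*d)" using assms(3,4) by (simp add: divide_right_mono)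
  also have "\<dots> = d" using assms(3) by (simp add: power2_eq_square)
  finally show ?thesis .
qed

lemma goodf_mid: "goodf u \<Longrightarrow> goodf u' \<Longrightarrow> goodf (\<lambda>x. (u x + u' x)/2)"
  by (auto simp: goodf_def intro!: borel_measurable_add borel_measurable_divide, (smt (verit) atLeastAtMost_iff)+)

lemma int_mid: "goodf u \<Longrightarrow> goodf u' \<Longrightarrow> integral\<^sup>L M01 (\<lambda>x. (u x + u' x)/2) = (integral\<^sup>L M01 u + integral\<^sup>L M01 u')/2"
  using goodf_int[of u] goodf_int[of u'] by simp

lemma goodf_ind: "A \<in> sets lebesgue \<Longrightarrow> A \<subseteq> {0..1} \<Longrightarrow> goodf (indicator A)"
  unfolding goodf_def by (auto simp: sets_M01 intro!: borel_measurable_indicator)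

lemma int_ind: "A \<in> sets lebesgue \<Longrightarrow> A \<subseteq> {0..1} \<Longrightarrow> integral\<^sup>L M01 (indicator A) = measure lebesgue A"
  by (simp add: Int_absorb2 meas_M01)

lemma sq_bounds: "goodf u \<Longrightarrow> 0 \<le> integral\<^sup>L M01 (\<lambda>x. (u x)^2) \<and> integral\<^sup>L M01 (\<lambda>x. (u x)^2) \<le> 1"
proof -
  assume u: "goodf u"
  have "integral\<^sup>L M01 (\<lambda>x. (u x)^2) \<le> integral\<^sup>L M01 (\<lambda>x. 1)"
    using u by (intro integral_mono int_sq finite_measure.integrable_const[OF fm01])
      (auto simp: goodf_def abs_square_le_1 power_le_one)
  then show ?thesis by (simp add: measure_M01_space)
qed



locale m3 =
  fixes L :: "nat \<Rightarrow> (real \<times> real) set" and c :: real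
  assumes incL: "\<And>k. L k \<subseteq> L (Suc k)"
    and Lsub: "\<And>k. L k \<subseteq> {0..1} \<times> {0..1}"
    and cle: "\<And>k. cover_m (L k) \<le> c"
begin

definition Cn :: "nat \<Rightarrow> ((real \<Rightarrow> real) \<times> (real \<Rightarrow> real)) set" where
  "Cn n = {(u, v). goodf u \<and> goodf v \<and> (\<forall>x y. (x, y) \<in> L n \<longrightarrow> 1 \<le> u x + v y) \<and>
      integral\<^sup>L M01 u + integral\<^sup>L M01 v \<le> c + 1 / (real n + 1)}"

definition NN :: "(real \<Rightarrow> real) \<times> (real \<Rightarrow> real) \<Rightarrow> real" where
  "NN p = integral\<^sup>L M01 (\<lambda>x. (fst p x)^2) + integral\<^sup>L M01 (\<lambda>x. (snd p x)^2)"

definition dd :: "nat \<Rightarrow> real" where "dd n = Inf (NN ` Cn n)"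

definition mid where "mid p q = ((\<lambda>x. (fst p x + fst q x)/2), (\<lambda>x. (snd p x + snd q x)/2))"

lemma L_mono: "k \<le> n \<Longrightarrow> L k \<subseteq> L n"
  using lift_Suc_mono_le[of L, OF incL] by blast

lemma Cn_ne: "Cn n \<noteq> {}"
proof -
  have "0 < 1 / (real n + 1)" by simp
  then have "cover_m (L n) < c + 1 / (real n + 1)" using cle[of n] by linarith
  then obtain A B where AB: "covers (L n) A B" "measure lebesgue A + measure lebesgue B < c + 1 / (real n + 1)"
    using cm_lessD[OF Lsub] by blast
  have AB2: "A \<in> sets lebesgue" "A \<subseteq> {0..1}" "B \<in> sets lebesgue" "B \<subseteq> {0..1}"
    "L n \<subseteq> A \<times> {0..1} \<union> {0..1} \<times> B" using AB(1) unfolding covers_def by auto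
  have "1 \<le> indicator A x + (indicator B y :: real)" if "(x, y) \<in> L n" for x y
    using AB2(5) that by (auto simp: indicator_def)
  moreover have "integral\<^sup>L M01 (indicator A) + integral\<^sup>L M01 (indicator B) \<le> c + 1 / (real n + 1)"
    using AB(2) int_ind[OF AB2(1,2)] int_ind[OF AB2(3,4)] by argo
  ultimately have "(indicator A, indicator B) \<in> Cn n"
    unfolding Cn_def using goodf_ind[OF AB2(1,2)] goodf_ind[OF AB2(3,4)] by auto
  then show ?thesis by blast
qed

lemma Cn_anti: "n \<le> m \<Longrightarrow> Cn m \<subseteq> Cn n"
proof
  fix p assume nm: "n \<le> m" and p: "p \<in> Cn m"
  have "1 / (real m + 1) \<le> 1 / (real n + 1)" using nm by (simp add: frac_le)
  then show "p \<in> Cn n" using p L_mono[OF nm] unfolding Cn_def by fastforce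
qed

lemma Cn_mid: assumes "p \<in> Cn n" "q \<in> Cn n" shows "mid p q \<in> Cn n"
proof -
  obtain u v where p: "p = (u, v)" by (cases p)
  obtain u' v' where q: "q = (u', v')" by (cases q)
  have A: "goodf u" "goodf v" "\<forall>x y. (x, y) \<in> L n \<longrightarrow> 1 \<le> u x + v y"
      "integral\<^sup>L M01 u + integral\<^sup>L M01 v \<le> c + 1 / (real n + 1)"
    using assms(1) unfolding p Cn_def by auto
  have B: "goodf u'" "goodf v'" "\<forall>x y. (x, y) \<in> L n \<longrightarrow> 1 \<le> u' x + v' y"
      "integral\<^sup>L M01 u' + integral\<^sup>L M01 v' \<le> c + 1 / (real n + 1)"
    using assms(2) unfolding q Cn_def by auto
  have I: "integral\<^sup>L M01 (\<lambda>x. (u x + u' x)/2) + integral\<^sup>L M01 (\<lambda>x. (v x + v' x)/2) \<le> c + 1 / (real n + 1)"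
    by (simp only: int_mid[OF A(1) B(1)] int_mid[OF A(2) B(2)]) (use A(4) B(4) in argo)
  have C: "1 \<le> (u x + u' x)/2 + (v y + v' y)/2" if "(x, y) \<in> L n" for x y
  proof -
    have "1 \<le> u x + v y" "1 \<le> u' x + v' y" using A(3) B(3) that by auto
    then show ?thesis by argo
  qed
  show ?thesis unfolding p q Cn_def mid_def fst_conv snd_conv
    using goodf_mid[OF A(1) B(1)] goodf_mid[OF A(2) B(2)] I C by blast
qed

lemma Cn_good: "p \<in> Cn n \<Longrightarrow> goodf (fst p) \<and> goodf (snd p)"
  by (auto simp: Cn_def)

lemma NN_bounds: "p \<in> Cn n \<Longrightarrow> 0 \<le> NN p \<and> NN p \<le> 2"
  using sq_bounds[of "fst p"] sq_bounds[of "snd p"] Cn_good[of p n] by (auto simp: NN_def)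

lemma bdd_NN: "bdd_below (NN ` Cn n)"
  using NN_bounds by (auto intro!: bdd_belowI[of _ 0])

lemma dd_le: "p \<in> Cn n \<Longrightarrow> dd n \<le> NN p"
  unfolding dd_def by (rule cInf_lower[OF _ bdd_NN]) auto

lemma dd_bounds: "0 \<le> dd n \<and> dd n \<le> 2"
proof -
  obtain p where p: "p \<in> Cn n" using Cn_ne by blast
  have "0 \<le> dd n" unfolding dd_def using Cn_ne NN_bounds by (intro cInf_greatest) auto
  then show ?thesis using dd_le[OF p] NN_bounds[OF p] by auto
qed

lemma dd_mono: "n \<le> m \<Longrightarrow> dd n \<le> dd m"
  unfolding dd_def using Cn_anti Cn_ne bdd_NN
  by (intro cInf_superset_mono) auto

definition w where "w n = (SOME p. p \<in> Cn n \<and> NN p < dd n + 1 / (real n + 1))"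

lemma w_prop: "w n \<in> Cn n \<and> NN (w n) < dd n + 1 / (real n + 1)"
proof -
  have "\<exists>p. p \<in> Cn n \<and> NN p < dd n + 1 / (real n + 1)"
  proof -
    have "Inf (NN ` Cn n) < dd n + 1 / (real n + 1)" unfolding dd_def by simp
    then have "\<exists>y\<in>NN ` Cn n. y < dd n + 1 / (real n + 1)"
      by (intro cInf_lessD) (use Cn_ne in auto)
    then show ?thesis by auto
  qed
  then show ?thesis unfolding w_def by (rule someI_ex)
qed

lemma w_diff:
  assumes nm: "n \<le> m"
  shows "integral\<^sup>L M01 (\<lambda>x. (fst (w n) x - fst (w m) x)^2) + integral\<^sup>L M01 (\<lambda>x. (snd (w n) x - snd (w m) x)^2)
    \<le> 2 * (dd m - dd n) + 4 / (real n + 1)"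
proof -
  have wn: "w n \<in> Cn n" and wm: "w m \<in> Cn n" using w_prop Cn_anti[OF nm] by auto
  have g: "goodf (fst (w n))" "goodf (snd (w n))" "goodf (fst (w m))" "goodf (snd (w m))"
    using Cn_good wn wm by auto
  have "dd n \<le> NN (mid (w n) (w m))" by (rule dd_le[OF Cn_mid[OF wn wm]])
  moreover have "NN (w n) < dd n + 1 / (real n + 1)" "NN (w m) < dd m + 1 / (real m + 1)" using w_prop by auto
  moreover have "1 / (real m + 1) \<le> 1 / (real n + 1)" using nm by (simp add: frac_le)
  moreover have "4 / (real n + 1) = 4 * (1 / (real n + 1))" by simp
  ultimately show ?thesis
    using parallelogram[OF g(1) g(3)] parallelogram[OF g(2) g(4)]
    unfolding NN_def mid_def fst_conv snd_conv by argo
qed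

end


lemma telescope:
  fixes U :: "nat \<Rightarrow> real \<Rightarrow> real"
  shows "U i x \<le> U 0 x + (\<Sum>t<i. \<bar>U (Suc t) x - U t x\<bar>)"
proof (induction i)
  case (Suc i)
  then show ?case by simp
qed simp

lemma min1_enn: "min 1 (ennreal a) = ennreal (min 1 a)"
  by (cases "a \<le> 1") (auto simp: min_def ennreal_leI ennreal_le_iff2 ennreal_1[symmetric] simp del: ennreal_1)

lemma build_H:
  fixes U :: "nat \<Rightarrow> real \<Rightarrow> real"
  assumes good: "\<And>j. goodf (U j)"
  defines "Hh \<equiv> \<lambda>x. ennreal (U 0 x) + (\<Sum>i. ennreal \<bar>U (Suc i) x - U i x\<bar>)"
  shows "goodf (\<lambda>x. enn2real (min 1 (Hh x)))"
    and "\<And>i x. x \<in> {0..1} \<Longrightarrow> min 1 (U i x) \<le> enn2real (min 1 (Hh x))"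
    and "ennreal (integral\<^sup>L M01 (\<lambda>x. enn2real (min 1 (Hh x)))) \<le>
          ennreal (integral\<^sup>L M01 (U 0)) + (\<Sum>i. ennreal (integral\<^sup>L M01 (\<lambda>x. \<bar>U (Suc i) x - U i x\<bar>)))"
proof -
  have [measurable]: "U j \<in> borel_measurable M01" for j using good goodf_def by auto
  have Hhm: "Hh \<in> borel_measurable M01" unfolding Hh_def by measurable
  have Hm: "(\<lambda>x. enn2real (min 1 (Hh x))) \<in> borel_measurable M01" using Hhm by measurable
  have le1: "enn2real (min 1 z) \<le> 1" for z :: ennreal
    by (metis enn2real_1 enn2real_mono ennreal_one_less_top min.cobounded1)
  show "goodf (\<lambda>x. enn2real (min 1 (Hh x)))"
    unfolding goodf_def using Hm le1 by auto
  show "min 1 (U i x) \<le> enn2real (min 1 (Hh x))" if x: "x \<in> {0..1}" for i x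
  proof -
    have pos: "0 \<le> U t x" for t using good[of t] x by (auto simp: goodf_def)
    have "ennreal (U i x) \<le> ennreal (U 0 x + (\<Sum>t<i. \<bar>U (Suc t) x - U t x\<bar>))"
      by (rule ennreal_leI[OF telescope])
    also have "\<dots> = ennreal (U 0 x) + (\<Sum>t<i. ennreal \<bar>U (Suc t) x - U t x\<bar>)"
      using pos by (simp add: ennreal_plus sum_nonneg sum_ennreal)
    also have "\<dots> \<le> Hh x" unfolding Hh_def
      by (intro add_left_mono sum_le_suminf) auto
    finally have "min 1 (ennreal (U i x)) \<le> min 1 (Hh x)" by (rule min.mono[OF order_refl])
    then have "enn2real (min 1 (ennreal (U i x))) \<le> enn2real (min 1 (Hh x))"
      by (rule enn2real_mono) (simp add: min_less_iff_disj)
    then show ?thesis using pos[of i] by (simp add: min1_enn)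
  qed
  have intH: "integrable M01 (\<lambda>x. enn2real (min 1 (Hh x)))"
    by (rule integrable01[of _ 1]) (use Hm le1 in auto)
  have "ennreal (integral\<^sup>L M01 (\<lambda>x. enn2real (min 1 (Hh x)))) = (\<integral>\<^sup>+x. ennreal (enn2real (min 1 (Hh x))) \<partial>M01)"
    by (rule nn_integral_eq_integral[symmetric, OF intH]) simp
  also have "\<dots> \<le> (\<integral>\<^sup>+x. Hh x \<partial>M01)"
  proof (rule nn_integral_mono)
    fix x
    have "min 1 (Hh x) \<noteq> top" by (metis ennreal_one_less_top min.absorb_iff2 min.strict_boundedE order.strict_iff_not top.extremum)
    then have "ennreal (enn2real (min 1 (Hh x))) = min 1 (Hh x)" by (simp add: ennreal_enn2real_if)
    then show "ennreal (enn2real (min 1 (Hh x))) \<le> Hh x" by simp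
  qed
  also have "\<dots> = (\<integral>\<^sup>+x. ennreal (U 0 x) \<partial>M01) + (\<integral>\<^sup>+x. (\<Sum>i. ennreal \<bar>U (Suc i) x - U i x\<bar>) \<partial>M01)"
    unfolding Hh_def by (rule nn_integral_add) auto
  also have "(\<integral>\<^sup>+x. (\<Sum>i. ennreal \<bar>U (Suc i) x - U i x\<bar>) \<partial>M01) = (\<Sum>i. \<integral>\<^sup>+x. ennreal \<bar>U (Suc i) x - U i x\<bar> \<partial>M01)"
    by (subst nn_integral_suminf) auto
  also have "(\<integral>\<^sup>+x. ennreal (U 0 x) \<partial>M01) = ennreal (integral\<^sup>L M01 (U 0))"
    by (rule nn_integral_eq_integral[OF goodf_int[OF good]], rule AE_I2) (use good[of 0] in \<open>auto simp: goodf_def\<close>)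
  also have "(\<lambda>i. \<integral>\<^sup>+x. ennreal \<bar>U (Suc i) x - U i x\<bar> \<partial>M01) = (\<lambda>i. ennreal (integral\<^sup>L M01 (\<lambda>x. \<bar>U (Suc i) x - U i x\<bar>)))"
    by (rule ext, rule nn_integral_eq_integral[OF int_absdiff[OF good good]]) simp
  finally show "ennreal (integral\<^sup>L M01 (\<lambda>x. enn2real (min 1 (Hh x)))) \<le>
          ennreal (integral\<^sup>L M01 (U 0)) + (\<Sum>i. ennreal (integral\<^sup>L M01 (\<lambda>x. \<bar>U (Suc i) x - U i x\<bar>)))" .
qed



context m3 begin

definition dist1 :: "nat \<Rightarrow> nat \<Rightarrow> real" where
  "dist1 n m = integral\<^sup>L M01 (\<lambda>x. \<bar>fst (w n) x - fst (w m) x\<bar>) + integral\<^sup>L M01 (\<lambda>x. \<bar>snd (w n) x - snd (w m) x\<bar>)"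

lemma dd_bdd: "bdd_above (range dd)"
  using dd_bounds by (auto intro!: bdd_aboveI[of _ 2])

lemma dd_le_D: "dd n \<le> (SUP n. dd n)"
  by (rule cSUP_upper[OF _ dd_bdd]) simp

lemma D_approx: assumes "e > 0" obtains n where "(SUP n. dd n) - e < dd n"
proof -
  have "(SUP n. dd n) - e < (SUP n. dd n)" using assms by simp
  then have "\<exists>n\<in>UNIV. (SUP n. dd n) - e < dd n" by (subst (asm) less_cSUP_iff[OF _ dd_bdd]) auto
  then show ?thesis using that by blast
qed

lemma w_good: "goodf (fst (w n)) \<and> goodf (snd (w n))"
  using w_prop Cn_good by blast

lemma cauchy: assumes "e > 0" shows "\<exists>n0. \<forall>n m. n0 \<le> n \<longrightarrow> n \<le> m \<longrightarrow> dist1 n m \<le> e"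
proof -
  define d where "d = e / 2"
  have d: "d > 0" using assms by (simp add: d_def)
  have d2: "d^2 > 0" using d by simp
  obtain n1 where n1: "(SUP n. dd n) - d^2/4 < dd n1" using D_approx[of "d^2/4"] d2 by auto
  obtain n2 where n2: "n2 > 0" "inverse (real n2) < d^2/8" using ex_inverse_of_nat_less[of "d^2/8"] d2 by auto
  show ?thesis
  proof (intro exI[of _ "max n1 n2"] allI impI)
    fix n m assume nm: "max n1 n2 \<le> n" "n \<le> m"
    have "dd n1 \<le> dd n" using nm by (intro dd_mono) auto
    moreover have "dd m \<le> (SUP n. dd n)" by (rule dd_le_D)
    moreover have "4 / (real n + 1) \<le> 4 * inverse (real n2)"
      using nm n2(1) by (simp add: field_simps)
    ultimately have "2 * (dd m - dd n) + 4 / (real n + 1) < d^2"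
      using n1 n2(2) by argo
    with w_diff[OF nm(2)] have sum: "integral\<^sup>L M01 (\<lambda>x. (fst (w n) x - fst (w m) x)^2) + integral\<^sup>L M01 (\<lambda>x. (snd (w n) x - snd (w m) x)^2) < d^2"
      by linarith
    have nn1: "0 \<le> integral\<^sup>L M01 (\<lambda>x. (fst (w n) x - fst (w m) x)^2)" by (rule Bochner_Integration.integral_nonneg) auto
    have nn2: "0 \<le> integral\<^sup>L M01 (\<lambda>x. (snd (w n) x - snd (w m) x)^2)" by (rule Bochner_Integration.integral_nonneg) auto
    have i1: "integral\<^sup>L M01 (\<lambda>x. (fst (w n) x - fst (w m) x)^2) \<le> d^2" using sum nn2 by linarith
    have i2: "integral\<^sup>L M01 (\<lambda>x. (snd (w n) x - snd (w m) x)^2) \<le> d^2" using sum nn1 by linarith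
    have a: "integral\<^sup>L M01 (\<lambda>x. \<bar>fst (w n) x - fst (w m) x\<bar>) \<le> d"
      by (rule l1_from_l2[OF _ _ d i1]) (use w_good in auto)
    have b: "integral\<^sup>L M01 (\<lambda>x. \<bar>snd (w n) x - snd (w m) x\<bar>) \<le> d"
      by (rule l1_from_l2[OF _ _ d i2]) (use w_good in auto)
    show "dist1 n m \<le> e" using a b unfolding dist1_def d_def by simp
  qed
qed

definition N0 :: "nat \<Rightarrow> nat" where
  "N0 j = (SOME n0. \<forall>n m. n0 \<le> n \<longrightarrow> n \<le> m \<longrightarrow> dist1 n m \<le> (1/2)^j)"

lemma N0_prop: "N0 j \<le> n \<Longrightarrow> n \<le> m \<Longrightarrow> dist1 n m \<le> (1/2)^j"
proof -
  have "\<exists>n0. \<forall>n m. n0 \<le> n \<longrightarrow> n \<le> m \<longrightarrow> dist1 n m \<le> (1/2)^j" by (rule cauchy) simp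
  from someI_ex[OF this] show "N0 j \<le> n \<Longrightarrow> n \<le> m \<Longrightarrow> dist1 n m \<le> (1/2)^j" unfolding N0_def by blast
qed

primrec s :: "nat \<Rightarrow> nat" where
  "s 0 = N0 0"
| "s (Suc j) = max (Suc (s j)) (N0 (Suc j))"

lemma s_ge: "N0 j \<le> s j" by (cases j) auto

lemma s_inc: "s j < s (Suc j)" by simp

lemma s_ge_j: "j \<le> s j"
  by (induction j) (auto simp: less_eq_Suc_le)

lemma s_dist: "dist1 (s j) (s (Suc j)) \<le> (1/2)^j"
  by (rule N0_prop[OF s_ge]) (simp add: less_imp_le)

end


lemma geom_half: "(\<Sum>i. ennreal ((1/2::real)^(i + J))) = ennreal ((1/2)^J * 2)"
proof -
  have sm: "summable (\<lambda>i. (1/2::real)^(i + J))"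
    by (simp add: power_add summable_mult2 summable_geometric)
  have "(\<Sum>i. (1/2::real)^(i + J)) = (1/2)^J * 2"
  proof -
    have "(\<Sum>i. (1/2::real)^(i + J)) = (\<Sum>i. (1/2)^i * (1/2)^J)" by (simp add: power_add)
    also have "\<dots> = (\<Sum>i. (1/2::real)^i) * (1/2)^J" by (rule suminf_mult2[symmetric]) (simp add: summable_geometric)
    also have "(\<Sum>i. (1/2::real)^i) = 2" by (simp add: suminf_geometric)
    finally show ?thesis by simp
  qed
  moreover have "(\<Sum>i. ennreal ((1/2::real)^(i + J))) = ennreal (\<Sum>i. (1/2::real)^(i + J))"
    by (rule suminf_ennreal2[OF _ sm]) simp
  ultimately show ?thesis by simp
qed

context m3 begin

lemma c_nonneg: "0 \<le> c"
  using cm_nonneg[OF Lsub[of 0]] cle[of 0] by linarith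

theorem main: "cover_m (\<Union>k. L k) \<le> c"
proof (rule field_le_epsilon)
  fix e :: real assume e: "e > 0"
  obtain J1 where J1: "(1/2::real)^J1 < e/4" using real_arch_pow_inv[of "e/4" "1/2"] e by auto
  obtain J2 where J2: "J2 > 0" "inverse (real J2) < e/2" using ex_inverse_of_nat_less[of "e/2"] e by auto
  define J where "J = max J1 J2"
  have pJ: "(1/2::real)^J \<le> (1/2)^J1" by (rule power_decreasing) (auto simp: J_def)
  have "J2 \<le> s J" using s_ge_j[of J] by (simp add: J_def)
  then have sJ: "1 / (real (s J) + 1) \<le> inverse (real J2)" using J2(1) by (simp add: field_simps)
  define U where "U j = fst (w (s (j + J)))" for j
  define V where "V j = snd (w (s (j + J)))" for j
  have gU: "goodf (U j)" and gV: "goodf (V j)" for j using w_good by (auto simp: U_def V_def)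
  define H where "H x = enn2real (min 1 (ennreal (U 0 x) + (\<Sum>i. ennreal \<bar>U (Suc i) x - U i x\<bar>)))" for x
  define G where "G x = enn2real (min 1 (ennreal (V 0 x) + (\<Sum>i. ennreal \<bar>V (Suc i) x - V i x\<bar>)))" for x
  have hH: "goodf H" "\<And>i x. x \<in> {0..1} \<Longrightarrow> min 1 (U i x) \<le> H x"
    "ennreal (integral\<^sup>L M01 H) \<le> ennreal (integral\<^sup>L M01 (U 0)) + (\<Sum>i. ennreal (integral\<^sup>L M01 (\<lambda>x. \<bar>U (Suc i) x - U i x\<bar>)))"
    using build_H[of U, OF gU] unfolding H_def[abs_def] by auto
  have hG: "goodf G" "\<And>i x. x \<in> {0..1} \<Longrightarrow> min 1 (V i x) \<le> G x"
    "ennreal (integral\<^sup>L M01 G) \<le> ennreal (integral\<^sup>L M01 (V 0)) + (\<Sum>i. ennreal (integral\<^sup>L M01 (\<lambda>x. \<bar>V (Suc i) x - V i x\<bar>)))"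
    using build_H[of V, OF gV] unfolding G_def[abs_def] by auto
  have LU: "(\<Union>k. L k) \<subseteq> {0..1} \<times> {0..1}" using Lsub by blast
  have cov: "1 \<le> H x + G y" if xy: "(x, y) \<in> (\<Union>k. L k)" for x y
  proof -
    obtain k where k: "(x, y) \<in> L k" using xy by blast
    have x01: "x \<in> {0..1}" and y01: "y \<in> {0..1}" using k Lsub[of k] by auto
    have "k \<le> s (k + J)" using s_ge_j[of "k + J"] by simp
    then have "(x, y) \<in> L (s (k + J))" using L_mono k by blast
    then have "1 \<le> U k x + V k y" using w_prop[of "s (k + J)"] unfolding Cn_def U_def V_def by auto
    moreover have "0 \<le> U k x" "0 \<le> V k y" using gU[of k] gV[of k] x01 y01 by (auto simp: goodf_def)
    moreover have "min 1 (U k x) \<le> H x" "min 1 (V k y) \<le> G y" using hH(2) hG(2) x01 y01 by auto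
    ultimately show ?thesis by linarith
  qed
  have thr: "cover_m (\<Union>k. L k) \<le> integral\<^sup>L M01 H + integral\<^sup>L M01 G"
    by (rule thresh[OF LU hH(1) hG(1) cov])
  define a where "a i = integral\<^sup>L M01 (\<lambda>x. \<bar>U (Suc i) x - U i x\<bar>)" for i
  define b where "b i = integral\<^sup>L M01 (\<lambda>x. \<bar>V (Suc i) x - V i x\<bar>)" for i
  have a0: "0 \<le> a i" and b0: "0 \<le> b i" for i by (auto simp: a_def b_def)
  have ab: "a i + b i \<le> (1/2)^(i + J)" for i
  proof -
    have "a i + b i = dist1 (s (i + J)) (s (Suc (i + J)))"
      unfolding a_def b_def dist1_def U_def V_def by (simp add: abs_minus_commute)
    then show ?thesis using s_dist[of "i + J"] by simp
  qed
  have int0: "integral\<^sup>L M01 (U 0) + integral\<^sup>L M01 (V 0) \<le> c + 1 / (real (s J) + 1)"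
    using w_prop[of "s J"] unfolding Cn_def U_def V_def by auto
  have iH: "0 \<le> integral\<^sup>L M01 H" "0 \<le> integral\<^sup>L M01 G"
    using hH(1) hG(1) by (auto simp: goodf_def intro!: Bochner_Integration.integral_nonneg)
  have "ennreal (integral\<^sup>L M01 H + integral\<^sup>L M01 G) = ennreal (integral\<^sup>L M01 H) + ennreal (integral\<^sup>L M01 G)"
    using iH by (simp add: ennreal_plus)
  also have "\<dots> \<le> (ennreal (integral\<^sup>L M01 (U 0)) + (\<Sum>i. ennreal (a i))) + (ennreal (integral\<^sup>L M01 (V 0)) + (\<Sum>i. ennreal (b i)))"
    using hH(3) hG(3) unfolding a_def b_def by (rule add_mono)
  also have "\<dots> = ennreal (integral\<^sup>L M01 (U 0)) + ennreal (integral\<^sup>L M01 (V 0)) + (\<Sum>i. ennreal (a i) + ennreal (b i))"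
    by (simp add: suminf_add[symmetric] add_ac)
  also have "\<dots> \<le> ennreal (c + 1 / (real (s J) + 1)) + (\<Sum>i. ennreal ((1/2::real)^(i + J)))"
  proof (rule add_mono)
    show "ennreal (integral\<^sup>L M01 (U 0)) + ennreal (integral\<^sup>L M01 (V 0)) \<le> ennreal (c + 1 / (real (s J) + 1))"
      using int0 gU[of 0] gV[of 0]
      by (subst ennreal_plus[symmetric]) (auto simp: goodf_def intro!: ennreal_leI Bochner_Integration.integral_nonneg)
    show "(\<Sum>i. ennreal (a i) + ennreal (b i)) \<le> (\<Sum>i. ennreal ((1/2::real)^(i + J)))"
    proof (rule suminf_le)
      fix i show "ennreal (a i) + ennreal (b i) \<le> ennreal ((1/2::real)^(i + J))"
        using ennreal_leI[OF ab[of i]] a0[of i] b0[of i] by (simp add: ennreal_plus)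
    qed (rule summableI)+
  qed
  also have "\<dots> = ennreal (c + 1 / (real (s J) + 1) + (1/2)^J * 2)"
    using c_nonneg by (simp add: geom_half ennreal_plus)
  finally have "integral\<^sup>L M01 H + integral\<^sup>L M01 G \<le> c + 1 / (real (s J) + 1) + (1/2)^J * 2"
    using c_nonneg by (subst (asm) ennreal_le_iff) auto
  then show "cover_m (\<Union>k. L k) \<le> c + e" using thr sJ J2 pJ J1 by linarith
qed

end



lemma cm_union_le:
  assumes "\<And>k. L k \<subseteq> L (Suc k)" "\<And>k. L k \<subseteq> {0..1} \<times> {0..1}" "\<And>k. cover_m (L k) \<le> c"
  shows "cover_m (\<Union>k. L k) \<le> c"
  by (rule m3.main) (unfold_locales, use assms in auto)

definition Q :: "(nat \<Rightarrow> real) set" where "Q = {y. \<forall>k. y k \<in> {0..1}}"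
definition XQ :: "((real \<times> real) \<times> (nat \<Rightarrow> real)) set" where "XQ = ({0..1} \<times> {0..1}) \<times> Q"

lemma compact_Q: "compact Q"
proof -
  have "Q = PiE UNIV (\<lambda>_. {0..1::real})" by (auto simp: Q_def PiE_def Pi_def)
  moreover have "compactin (product_topology (\<lambda>_. euclidean) (UNIV::nat set)) (PiE UNIV (\<lambda>_. {0..1::real}))"
    by (subst compactin_PiE) auto
  ultimately show ?thesis by (simp add: euclidean_product_topology)
qed

lemma compact_XQ: "compact XQ"
  unfolding XQ_def by (intro compact_Times compact_Q) auto

lemma Q_ne: "(\<lambda>_. 0) \<in> Q" by (simp add: Q_def)

definition Ksd :: "((real \<times> real) \<times> (nat \<Rightarrow> real)) set \<Rightarrow> bool" where
  "Ksd G \<longleftrightarrow> (\<exists>K :: nat \<Rightarrow> nat \<Rightarrow> ((real \<times> real) \<times> (nat \<Rightarrow> real)) set.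
      (\<forall>n j. compact (K n j) \<and> K n j \<subseteq> XQ) \<and> G = (\<Inter>n. \<Union>j. K n j))"

definition Rep :: "(real \<times> real) set \<Rightarrow> bool" where
  "Rep L \<longleftrightarrow> (\<exists>G. Ksd G \<and> L = fst ` G)"

lemma Ksd_sub: "Ksd G \<Longrightarrow> G \<subseteq> XQ"
  unfolding Ksd_def by blast

lemma closed_rep:
  assumes "closed F" shows "Rep (F \<inter> ({0..1} \<times> {0..1}))"
proof -
  let ?G = "(F \<inter> ({0..1} \<times> {0..1})) \<times> Q"
  have c: "compact ?G" using assms compact_Q by (intro compact_Times closed_Int_compact) auto
  have "Ksd ?G" unfolding Ksd_def
    by (rule exI[of _ "\<lambda>n j. ?G"]) (use c in \<open>auto simp: XQ_def\<close>)
  moreover have "F \<inter> ({0..1} \<times> {0..1}) = fst ` ?G" using Q_ne by force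
  ultimately show ?thesis unfolding Rep_def by blast
qed

lemma cont_tl: "continuous_on UNIV (\<lambda>p::(real \<times> real) \<times> (nat \<Rightarrow> real). (fst p, \<lambda>k. snd p (Suc k)))"
  by (intro continuous_on_Pair continuous_on_fst continuous_on_coordinatewise_then_product
      continuous_on_compose2[OF continuous_on_product_coordinates continuous_on_snd]) auto

lemma cont_dec: "continuous_on UNIV (\<lambda>p::(real \<times> real) \<times> (nat \<Rightarrow> real). (fst p, \<lambda>k. snd p (prod_encode (i, k))))"
  by (intro continuous_on_Pair continuous_on_fst continuous_on_coordinatewise_then_product
      continuous_on_compose2[OF continuous_on_product_coordinates continuous_on_snd]) auto

lemma cont_c0: "continuous_on UNIV (\<lambda>p::(real \<times> real) \<times> (nat \<Rightarrow> real). snd p 0)"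
  by (intro continuous_on_compose2[OF continuous_on_product_coordinates continuous_on_snd]) auto

lemma compact_preimage_XQ:
  fixes f :: "(real \<times> real) \<times> (nat \<Rightarrow> real) \<Rightarrow> 'b::t2_space"
  assumes "continuous_on UNIV f" "compact K"
  shows "compact ({p \<in> XQ. f p \<in> K})"
proof -
  have "closed (f -` K)" by (rule closed_vimage[OF compact_imp_closed[OF assms(2)] assms(1)])
  then have "compact (f -` K \<inter> XQ)" using compact_XQ by (intro closed_Int_compact)
  moreover have "{p \<in> XQ. f p \<in> K} = f -` K \<inter> XQ" by auto
  ultimately show ?thesis by simp
qed



lemma Rep_choice:
  assumes "\<forall>i::nat. Rep (L i)"
  shows "\<exists>K :: nat \<Rightarrow> nat \<Rightarrow> nat \<Rightarrow> ((real \<times> real) \<times> (nat \<Rightarrow> real)) set.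
    \<forall>i. (\<forall>n j. compact (K i n j) \<and> K i n j \<subseteq> XQ) \<and> L i = fst ` (\<Inter>n. \<Union>j. K i n j)"
proof -
  have "\<forall>i. \<exists>Ki :: nat \<Rightarrow> nat \<Rightarrow> _. (\<forall>n j. compact (Ki n j) \<and> Ki n j \<subseteq> XQ) \<and> L i = fst ` (\<Inter>n. \<Union>j. Ki n j)"
  proof
    fix i
    obtain G where G: "Ksd G" "L i = fst ` G" using assms unfolding Rep_def by metis
    from G(1) have ex: "\<exists>Ki :: nat \<Rightarrow> nat \<Rightarrow> _. (\<forall>n j. compact (Ki n j) \<and> Ki n j \<subseteq> XQ) \<and> G = (\<Inter>n. \<Union>j. Ki n j)"
      unfolding Ksd_def .
    define Ki where "Ki = (SOME Ki :: nat \<Rightarrow> nat \<Rightarrow> _. (\<forall>n j. compact (Ki n j) \<and> Ki n j \<subseteq> XQ) \<and> G = (\<Inter>n. \<Union>j. Ki n j))"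
    have Ki0: "(\<forall>n j. compact (Ki n j) \<and> Ki n j \<subseteq> XQ) \<and> G = (\<Inter>n. \<Union>j. Ki n j)"
      unfolding Ki_def by (rule someI_ex[OF ex])
    note Ki = conjunct1[OF Ki0] conjunct2[OF Ki0]
    show "\<exists>Ki :: nat \<Rightarrow> nat \<Rightarrow> _. (\<forall>n j. compact (Ki n j) \<and> Ki n j \<subseteq> XQ) \<and> L i = fst ` (\<Inter>n. \<Union>j. Ki n j)"
      by (rule exI[of _ Ki]) (use Ki G in simp)
  qed
  then show ?thesis by (rule choice)
qed

lemma UN_prod_decode: "(\<Union>m. f (fst (prod_decode m)) (snd (prod_decode m))) = (\<Union>i. \<Union>j. f i j)"
proof -
  have "(\<exists>m. x \<in> f (fst (prod_decode m)) (snd (prod_decode m))) \<longleftrightarrow> (\<exists>i j. x \<in> f i j)" for x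
    by (metis fst_conv prod_encode_inverse snd_conv)
  then show ?thesis by (intro set_eqI) simp
qed

lemma INT_prod_decode: "(\<Inter>m. f (fst (prod_decode m)) (snd (prod_decode m))) = (\<Inter>i. \<Inter>j. f i j)"
proof -
  have "(\<forall>m. x \<in> f (fst (prod_decode m)) (snd (prod_decode m))) \<longleftrightarrow> (\<forall>i j. x \<in> f i j)" for x
    by (metis fst_conv prod_encode_inverse snd_conv)
  then show ?thesis by (intro set_eqI) simp
qed

lemma union_rep:
  assumes "\<And>i::nat. Rep (L i)" shows "Rep (\<Union>i. L i)"
proof -
  have "\<forall>i. Rep (L i)" using assms by blast
  note ex = Rep_choice[OF this]
  define K where "K = (SOME K :: nat \<Rightarrow> nat \<Rightarrow> nat \<Rightarrow> _. \<forall>i. (\<forall>n j. compact (K i n j) \<and> K i n j \<subseteq> XQ) \<and> L i = fst ` (\<Inter>n. \<Union>j. K i n j))"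
  have K0: "\<forall>i. (\<forall>n j. compact (K i n j) \<and> K i n j \<subseteq> XQ) \<and> L i = fst ` (\<Inter>n. \<Union>j. K i n j)"
    unfolding K_def by (rule someI_ex[OF ex])
  have Kc: "\<And>i n j. compact (K i n j)" and Ks: "\<And>i n j. K i n j \<subseteq> XQ"
    and KL: "\<And>i. L i = fst ` (\<Inter>n. \<Union>j. K i n j)" using K0 by auto
  define G where "G i = (\<Inter>n. \<Union>j. K i n j)" for i
  define tl where "tl y = (\<lambda>k. y (Suc k))" for y :: "nat \<Rightarrow> real"
  define a where "a i = 1 / (real i + 1)" for i :: nat
  have a01: "a i \<in> {0..1}" for i by (auto simp: a_def)
  have ainj: "a i = a i' \<Longrightarrow> i = i'" for i i' by (auto simp: a_def)
  define K' where "K' i n j = {p \<in> XQ. (snd p 0, fst p, tl (snd p)) \<in> {a i} \<times> K i n j}" for i n j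
  have cont: "continuous_on UNIV (\<lambda>p::(real \<times> real) \<times> (nat \<Rightarrow> real). (snd p 0, fst p, tl (snd p)))"
    unfolding tl_def by (rule continuous_on_Pair[OF cont_c0 cont_tl])
  have K'c: "compact (K' i n j)" for i n j unfolding K'_def
    by (rule compact_preimage_XQ[OF cont]) (rule compact_Times[OF compact_sing Kc])
  define KK where "KK n m = K' (fst (prod_decode m)) n (snd (prod_decode m))" for n m
  define GG where "GG = (\<Inter>n. \<Union>m. KK n m)"
  have KKc: "compact (KK n m)" for n m unfolding KK_def by (rule K'c)
  have KKs: "KK n m \<subseteq> XQ" for n m unfolding KK_def K'_def by auto
  have "Ksd GG" unfolding Ksd_def GG_def
    by (rule exI[of _ KK]) (use KKc KKs in auto)
  define P where "P i = {p \<in> XQ. snd p 0 = a i \<and> (fst p, tl (snd p)) \<in> G i}" for i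
  have GGP: "GG = (\<Union>i. P i)"
  proof -
    have "GG = (\<Inter>n. \<Union>i. \<Union>j. K' i n j)" unfolding GG_def KK_def
      by (simp add: UN_prod_decode[where f="\<lambda>i j. K' i _ j"])
    also have "\<dots> = (\<Union>i. P i)"
    proof (intro equalityI subsetI)
      fix p assume p: "p \<in> (\<Inter>n. \<Union>i. \<Union>j. K' i n j)"
      then obtain i0 j0 where "p \<in> K' i0 0 j0" by blast
      then have i0: "snd p 0 = a i0" "p \<in> XQ" by (auto simp: K'_def)
      have "(fst p, tl (snd p)) \<in> G i0" unfolding G_def
      proof
        fix n show "(fst p, tl (snd p)) \<in> (\<Union>j. K i0 n j)"
        proof -
          obtain i j where "p \<in> K' i n j" using p by blast
          then have "snd p 0 = a i" "(fst p, tl (snd p)) \<in> K i n j" by (auto simp: K'_def)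
          with i0 ainj show ?thesis by auto
        qed
      qed
      then show "p \<in> (\<Union>i. P i)" using i0 by (auto simp: P_def)
    next
      fix p assume "p \<in> (\<Union>i. P i)"
      then obtain i where "p \<in> P i" by blast
      then show "p \<in> (\<Inter>n. \<Union>i. \<Union>j. K' i n j)" by (auto simp: P_def G_def K'_def)
    qed
    finally show ?thesis .
  qed
  have PL: "fst ` P i = L i" for i
  proof
    show "fst ` P i \<subseteq> L i" unfolding KL P_def G_def by force
    show "L i \<subseteq> fst ` P i"
    proof
      fix x assume "x \<in> L i"
      then obtain y where xy: "(x, y) \<in> G i" unfolding KL G_def by force
      then have "(x, y) \<in> XQ" using Ks unfolding G_def by blast
      then have x: "x \<in> {0..1} \<times> {0..1}" and y: "y \<in> Q" by (auto simp: XQ_def)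
      define y' where "y' = (\<lambda>k. if k = 0 then a i else y (k - 1))"
      have "y' \<in> Q" using y a01 by (auto simp: Q_def y'_def)
      moreover have "tl y' = y" by (auto simp: tl_def y'_def)
      ultimately have "(x, y') \<in> P i" using x xy by (auto simp: P_def XQ_def y'_def)
      then show "x \<in> fst ` P i" by force
    qed
  qed
  have "(\<Union>i. L i) = fst ` GG" unfolding GGP image_UN PL ..
  with \<open>Ksd GG\<close> show ?thesis unfolding Rep_def by blast
qed



lemma inter_rep:
  assumes "\<And>i::nat. Rep (L i)" shows "Rep (\<Inter>i. L i)"
proof -
  have "\<forall>i. Rep (L i)" using assms by blast
  note ex = Rep_choice[OF this]
  define K where "K = (SOME K :: nat \<Rightarrow> nat \<Rightarrow> nat \<Rightarrow> _. \<forall>i. (\<forall>n j. compact (K i n j) \<and> K i n j \<subseteq> XQ) \<and> L i = fst ` (\<Inter>n. \<Union>j. K i n j))"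
  have K0: "\<forall>i. (\<forall>n j. compact (K i n j) \<and> K i n j \<subseteq> XQ) \<and> L i = fst ` (\<Inter>n. \<Union>j. K i n j)"
    unfolding K_def by (rule someI_ex[OF ex])
  have Kc: "\<And>i n j. compact (K i n j)" and Ks: "\<And>i n j. K i n j \<subseteq> XQ"
    and KL: "\<And>i. L i = fst ` (\<Inter>n. \<Union>j. K i n j)" using K0 by auto
  define G where "G i = (\<Inter>n. \<Union>j. K i n j)" for i
  have GXQ: "G i \<subseteq> XQ" for i using Ks unfolding G_def by blast
  define dec where "dec i y = (\<lambda>k. y (prod_encode (i, k)))" for i and y :: "nat \<Rightarrow> real"
  define K' where "K' i n j = {p \<in> XQ. (fst p, dec i (snd p)) \<in> K i n j}" for i n j
  have K'c: "compact (K' i n j)" for i n j unfolding K'_def dec_def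
    by (rule compact_preimage_XQ[OF cont_dec Kc])
  define KK where "KK m j = K' (fst (prod_decode m)) (snd (prod_decode m)) j" for m j
  define GG where "GG = (\<Inter>m. \<Union>j. KK m j)"
  have KKc: "compact (KK n m)" for n m unfolding KK_def by (rule K'c)
  have KKs: "KK n m \<subseteq> XQ" for n m unfolding KK_def K'_def by auto
  have "Ksd GG" unfolding Ksd_def GG_def
    by (rule exI[of _ KK]) (use KKc KKs in auto)
  have GGeq: "GG = {p \<in> XQ. \<forall>i. (fst p, dec i (snd p)) \<in> G i}"
  proof -
    have "GG = (\<Inter>i. \<Inter>n. \<Union>j. K' i n j)" unfolding GG_def KK_def
      by (rule INT_prod_decode[where f="\<lambda>i n. \<Union>j. K' i n j"])
    also have "\<dots> = {p \<in> XQ. \<forall>i. (fst p, dec i (snd p)) \<in> G i}"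
      by (auto simp: K'_def G_def)
    finally show ?thesis .
  qed
  have "(\<Inter>i. L i) = fst ` GG"
  proof (intro equalityI subsetI)
    fix x assume "x \<in> fst ` GG"
    then obtain y where "(x, y) \<in> GG" by force
    then have "(x, dec i y) \<in> G i" for i unfolding GGeq by auto
    then show "x \<in> (\<Inter>i. L i)" unfolding KL G_def by force
  next
    fix x assume x: "x \<in> (\<Inter>i. L i)"
    have "\<forall>i. \<exists>y. (x, y) \<in> G i" using x unfolding KL G_def by force
    then obtain yy where yy: "\<And>i. (x, yy i) \<in> G i" by metis
    define y where "y = (\<lambda>k. yy (fst (prod_decode k)) (snd (prod_decode k)))"
    have dy: "dec i y = yy i" for i by (simp add: dec_def y_def)
    have "(x, yy i) \<in> XQ" for i using yy GXQ by blast
    then have "yy i \<in> Q" "x \<in> {0..1} \<times> {0..1}" for i by (auto simp: XQ_def)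
    then have "y \<in> Q" by (auto simp: Q_def y_def)
    then have "(x, y) \<in> GG" unfolding GGeq using dy yy \<open>x \<in> {0..1} \<times> {0..1}\<close> by (auto simp: XQ_def)
    then show "x \<in> fst ` GG" by force
  qed
  with \<open>Ksd GG\<close> show ?thesis unfolding Rep_def by blast
qed



lemma open_rep:
  assumes "open (U :: (real \<times> real) set)" shows "Rep (U \<inter> ({0..1} \<times> {0..1}))"
proof -
  have "fsigma_in euclidean U"
    using open_imp_fsigma_in[OF metrizable_space_euclidean, of U] assms open_openin by blast
  then have "\<exists>C. (\<forall>n. closedin euclidean (C n)) \<and> (\<forall>n. C n \<subseteq> C (Suc n)) \<and> \<Union>(range C) = U"
    by (simp only: fsigma_in_ascending)
  then obtain C :: "nat \<Rightarrow> (real \<times> real) set" where C0: "(\<forall>n. closedin euclidean (C n)) \<and> (\<forall>n. C n \<subseteq> C (Suc n)) \<and> \<Union>(range C) = U"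
    by (rule exE)
  have C: "\<And>n. closedin euclidean (C n)" "\<Union>(range C) = U" using C0 by auto
  have "U \<inter> ({0..1} \<times> {0..1}) = (\<Union>n. C n \<inter> ({0..1} \<times> {0..1}))" using C(2) by blast
  moreover have "Rep (\<Union>n. C n \<inter> ({0..1} \<times> {0..1}))"
    by (rule union_rep, rule closed_rep) (use C(1) in simp)
  ultimately show ?thesis by simp
qed

lemma borel_rep2:
  assumes "A \<in> sets borel"
  shows "Rep (A \<inter> ({0..1} \<times> {0..1})) \<and> Rep (- A \<inter> ({0..1} \<times> {0..1}))"
proof -
  have "A \<in> sigma_sets UNIV {S. open S}" using assms by (simp add: sets_borel)
  then show ?thesis
  proof (induction rule: sigma_sets.induct)
    case (Basic a)
    then show ?case using open_rep closed_rep[of "- a"] by (auto simp: closed_Compl)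
  next
    case Empty
    then show ?case using closed_rep[of "{}"] closed_rep[of UNIV] by auto
  next
    case (Compl a)
    then show ?case by (simp add: Diff_eq)
  next
    case (Union a)
    have u: "(\<Union>(range a)) \<inter> ({0..1} \<times> {0..1}) = (\<Union>i. a i \<inter> ({0..1} \<times> {0..1}))" by blast
    have v: "- (\<Union>(range a)) \<inter> ({0..1} \<times> {0..1}) = (\<Inter>i. - a i \<inter> ({0..1} \<times> {0..1}))" by blast
    have 1: "Rep (\<Union>i. a i \<inter> ({0..1} \<times> {0..1}))" by (rule union_rep) (use Union.IH in blast)
    have 2: "Rep (\<Inter>i. - a i \<inter> ({0..1} \<times> {0..1}))" by (rule inter_rep) (use Union.IH in blast)
    show ?case using 1 2 by (simp only: u v)
  qed
qed

lemma borel_rep: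
  assumes "L \<in> sets borel" "L \<subseteq> {0..1} \<times> {0..1}"
  shows "Rep L"
  using borel_rep2[OF assms(1)] assms(2) by (simp add: Int_absorb2)



lemma dec_compact_open:
  fixes D :: "nat \<Rightarrow> ((real \<times> real) \<times> (nat \<Rightarrow> real)) set"
  assumes Dc: "\<And>n. compact (D n)" and Dd: "\<And>n. D (Suc n) \<subseteq> D n" and W: "open W" and sub: "(\<Inter>n. D n) \<subseteq> W"
  shows "\<exists>n. D n \<subseteq> W"
proof (rule ccontr)
  assume H: "\<not> (\<exists>n. D n \<subseteq> W)"
  have anti: "n \<le> m \<Longrightarrow> D m \<subseteq> D n" for n m
    using lift_Suc_antimono_le[of D, OF Dd] by blast
  have S: "compact (- W \<inter> D 0)" using W Dc by (intro closed_Int_compact) auto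
  have "(- W \<inter> D 0) \<inter> \<Inter>(range D) \<noteq> {}"
  proof (rule compact_imp_fip[OF S])
    show "\<And>T. T \<in> range D \<Longrightarrow> closed T" using Dc compact_imp_closed by blast
    fix F' assume F': "finite F'" "F' \<subseteq> range D"
    then obtain I where I: "finite I" "F' = D ` I" using finite_subset_image[OF F'(1) F'(2)] by blast
    define m where "m = (if I = {} then 0 else Max I)"
    have "D m \<subseteq> \<Inter>F'"
    proof
      fix x assume x: "x \<in> D m"
      show "x \<in> \<Inter>F'"
      proof
        fix T assume "T \<in> F'"
        then obtain i where i: "i \<in> I" "T = D i" using I by blast
        then have "i \<le> m" using I(1) by (auto simp: m_def)
        then show "x \<in> T" using anti x i by blast
      qed
    qed
    moreover have "D m \<subseteq> D 0" using anti by blast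
    moreover obtain y where "y \<in> D m" "y \<notin> W" using H by blast
    ultimately show "(- W \<inter> D 0) \<inter> \<Inter>F' \<noteq> {}" by blast
  qed
  then show False using sub by blast
qed

lemma capac:
  assumes "Rep L" "cover_m L > 0"
  shows "\<exists>K. compact K \<and> K \<subseteq> L \<and> cover_m K > 0"
proof -
  define c where "c = cover_m L"
  have c: "c > 0" using assms(2) by (simp add: c_def)
  obtain G where G: "Ksd G" "L = fst ` G" using assms(1) unfolding Rep_def by metis
  from G(1) have ex: "\<exists>K :: nat \<Rightarrow> nat \<Rightarrow> _. (\<forall>n j. compact (K n j) \<and> K n j \<subseteq> XQ) \<and> G = (\<Inter>n. \<Union>j. K n j)"
    unfolding Ksd_def .
  define K where "K = (SOME K :: nat \<Rightarrow> nat \<Rightarrow> _. (\<forall>n j. compact (K n j) \<and> K n j \<subseteq> XQ) \<and> G = (\<Inter>n. \<Union>j. K n j))"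
  have K0: "(\<forall>n j. compact (K n j) \<and> K n j \<subseteq> XQ) \<and> G = (\<Inter>n. \<Union>j. K n j)"
    unfolding K_def by (rule someI_ex[OF ex])
  have Kc: "\<And>n j. compact (K n j)" and Ks: "\<And>n j. K n j \<subseteq> XQ" and GK: "G = (\<Inter>n. \<Union>j. K n j)"
    using K0 by auto
  have GXQ: "G \<subseteq> XQ" using Ks GK by blast
  have fstX: "fst ` (G \<inter> S) \<subseteq> {0..1} \<times> {0..1}" for S using GXQ by (auto simp: XQ_def)
  define K' where "K' n j = (\<Union>i\<le>j. K n i)" for n j
  have K'c: "compact (K' n j)" for n j unfolding K'_def using Kc by auto
  have K'inc: "K' n j \<subseteq> K' n (Suc j)" for n j unfolding K'_def by (intro UN_mono) auto
  have K'U: "(\<Union>j. K' n j) = (\<Union>j. K n j)" for n unfolding K'_def by auto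
  have step: "\<exists>j. c/2 < cover_m (fst ` (G \<inter> S \<inter> K' n j))" if S: "c/2 < cover_m (fst ` (G \<inter> S))" for S n
  proof (rule ccontr)
    assume "\<not> ?thesis"
    then have le: "cover_m (fst ` (G \<inter> S \<inter> K' n j)) \<le> c/2" for j using not_less by blast
    have "cover_m (\<Union>j. fst ` (G \<inter> S \<inter> K' n j)) \<le> c/2"
    proof (rule cm_union_le)
      show "fst ` (G \<inter> S \<inter> K' n j) \<subseteq> fst ` (G \<inter> S \<inter> K' n (Suc j))" for j using K'inc by blast
      show "fst ` (G \<inter> S \<inter> K' n j) \<subseteq> {0..1} \<times> {0..1}" for j using fstX[of "S \<inter> K' n j"] by (simp add: Int_assoc)
    qed (rule le)
    moreover have "(\<Union>j. fst ` (G \<inter> S \<inter> K' n j)) = fst ` (G \<inter> S)"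
    proof -
      have "G \<subseteq> (\<Union>j. K n j)" unfolding GK by (rule INT_lower) simp
      then have "G \<subseteq> (\<Union>j. K' n j)" by (simp only: K'U)
      then have "(\<Union>j. G \<inter> S \<inter> K' n j) = G \<inter> S" by blast
      then show ?thesis by (metis image_UN)
    qed
    ultimately show False using S by simp
  qed
  define jsel where "jsel n S = (SOME j. c/2 < cover_m (fst ` (G \<inter> S \<inter> K' n j)))" for n S
  define D where "D = rec_nat XQ (\<lambda>n Dn. Dn \<inter> K' n (jsel n Dn))"
  have D0: "D 0 = XQ" and DS: "D (Suc n) = D n \<inter> K' n (jsel n (D n))" for n by (simp_all add: D_def)
  have Dbig: "c/2 < cover_m (fst ` (G \<inter> D n))" for n
  proof (induction n)
    case 0
    have "G \<inter> XQ = G" using GXQ by blast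
    then show ?case using c by (simp add: D0 c_def G(2)[symmetric])
  next
    case (Suc n)
    have "c/2 < cover_m (fst ` (G \<inter> D n \<inter> K' n (jsel n (D n))))"
      unfolding jsel_def by (rule someI_ex[OF step[OF Suc.IH]])
    then show ?case by (simp add: DS Int_assoc)
  qed
  have Dc: "compact (D n)" for n
    by (induction n) (auto simp: D0 DS compact_XQ K'c)
  have Dd: "D (Suc n) \<subseteq> D n" for n by (auto simp: DS)
  define E where "E = (\<Inter>n. D n)"
  have EG: "E \<subseteq> G"
  proof
    fix p assume p: "p \<in> E"
    have "p \<in> (\<Union>j. K n j)" for n
    proof -
      have "p \<in> D (Suc n)" using p by (auto simp: E_def)
      then have "p \<in> K' n (jsel n (D n))" by (simp add: DS)
      then show ?thesis using K'U by blast
    qed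
    then show "p \<in> G" using GK by blast
  qed
  have Ec: "compact E"
  proof -
    have eq: "E = (\<Inter>n. D n) \<inter> D 0" by (auto simp: E_def)
    have cl: "closed (\<Inter>n. D n)" using Dc compact_imp_closed by blast
    show ?thesis unfolding eq by (rule closed_Int_compact[OF cl Dc])
  qed
  define Kf where "Kf = fst ` E"
  have Kfc: "compact Kf" unfolding Kf_def by (rule compact_continuous_image[OF continuous_on_fst[OF continuous_on_id] Ec])
  have KfL: "Kf \<subseteq> L" unfolding Kf_def G(2) using EG by blast
  have KfX: "Kf \<subseteq> {0..1} \<times> {0..1}" using fstX[of UNIV] EG unfolding Kf_def by auto
  have "c/2 \<le> cover_m Kf"
  proof (rule ccontr)
    assume "\<not> c/2 \<le> cover_m Kf"
    then have lt: "cover_m Kf < c/2" by simp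
    obtain U V :: "real set" where UV: "open U" "open V" "Kf \<subseteq> (U \<times> UNIV) \<union> (UNIV \<times> V)"
      and P: "\<And>L'. L' \<subseteq> {0..1} \<times> {0..1} \<Longrightarrow> L' \<subseteq> (U \<times> UNIV) \<union> (UNIV \<times> V) \<Longrightarrow> cover_m L' < c/2"
      using cm_usc[OF KfX lt] by blast
    define W :: "((real \<times> real) \<times> (nat \<Rightarrow> real)) set" where "W = fst -` ((U \<times> UNIV) \<union> (UNIV \<times> V))"
    have "open ((U \<times> UNIV) \<union> (UNIV \<times> V))" using UV by (intro open_Un open_Times) auto
    then have Oo: "open W" unfolding W_def by (rule open_vimage_fst)
    have "(\<Inter>n. D n) \<subseteq> W" using UV(3) unfolding W_def Kf_def E_def by blast
    then obtain n where "D n \<subseteq> W" using dec_compact_open[of D W] Dc Dd Oo by blast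
    then have "fst ` (G \<inter> D n) \<subseteq> (U \<times> UNIV) \<union> (UNIV \<times> V)" unfolding W_def by blast
    then have "cover_m (fst ` (G \<inter> D n)) < c/2" by (rule P[OF fstX[of "D n"]])
    then show False using Dbig[of n] by simp
  qed
  then show ?thesis using Kfc KfL c by (intro exI[of _ Kf]) auto
qed

theorem lemmaA4:
  fixes L :: "(real \<times> real) set"
  assumes "L \<in> sets borel"
    and "L \<subseteq> {0..1} \<times> {0..1}"
    and "cover_m L > 0"
  shows "\<exists>K. compact K \<and> K \<subseteq> L \<and> cover_m K > 0"
  by (rule capac[OF borel_rep[OF assms(1,2)] assms(3)])


end
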